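(* Let $1<A'<A<B$. There exists a constant $C>0$, depending only on $A,A',B$, such that the following holds: if $f\in(\mathscr{A}^{(B)})^n$ satisfies $\|f\|_B<C$, and $Y=X+f(X)$ (where $X=(X_1,\dots,X_n)$ is the tuple of generators) satisfies $\|Y\|_{A'}\le A$, then there exists $G\in(\mathscr{A}^{(A)})^n$ such that $X=G(Y)$ in $(\mathscr{A}^{(A')})^n$.
   Context: $\mathscr{A}=\mathbb{C}\langle X_1,\dots,X_n\rangle$ is the algebra of non-commutative polynomials. For a polynomial $P=\sum_q\lambda_q(P)q$ (sum over monomials $q$) and $A>1$, $\|P\|_A=\sum_q|\lambda_q(P)|A^{\deg q}$; $\mathscr{A}^{(A)}$ is the completion (Banach algebra of absolutely convergent non-commutative power series). For tuples, $\|G\|_A=\max_j\|G_j\|_A$. An element of $\mathscr{A}^{(A)}$ can be evaluated at any $n$-tuple of elements of a Banach algebra of norms at most $A$; in particular $G(Y)$ is defined in $\mathscr{A}^{(A')}$ when $\|Y_j\|_{A'}\le A$. *)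

theory Defs
  imports "HOL-Analysis.Analysis"
begin

text \<open>Non-commutative power series in n variables X_0,...,X_{n-1}: a monomial is a
word (list of variable indices), a series is its coefficient function.\<close>

type_synonym ncser = "nat list \<Rightarrow> complex"

definition ncnorm :: "real \<Rightarrow> ncser \<Rightarrow> real" where
  "ncnorm A P = (\<Sum>\<^sub>\<infinity> w. norm (P w) * A ^ length w)"

definition in_ncA :: "nat \<Rightarrow> real \<Rightarrow> ncser \<Rightarrow> bool" where
  "in_ncA n A P \<longleftrightarrow> (\<forall>w. \<not> set w \<subseteq> {..<n} \<longrightarrow> P w = 0)
      \<and> (\<lambda>w. norm (P w) * A ^ length w) summable_on UNIV"

definition ncone :: ncser where
  "ncone w = (if w = [] then 1 else 0)"

definition ncgen :: "nat \<Rightarrow> ncser" where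
  "ncgen j w = (if w = [j] then 1 else 0)"

definition ncmult :: "ncser \<Rightarrow> ncser \<Rightarrow> ncser" where
  "ncmult P Q w = (\<Sum>i\<le>length w. P (take i w) * Q (drop i w))"

definition ncmon :: "(nat \<Rightarrow> ncser) \<Rightarrow> nat list \<Rightarrow> ncser" where
  "ncmon Y q = foldr (\<lambda>j acc. ncmult (Y j) acc) q ncone"

definition ncsubst :: "ncser \<Rightarrow> (nat \<Rightarrow> ncser) \<Rightarrow> ncser" where
  "ncsubst G Y w = (\<Sum>\<^sub>\<infinity> q. G q * ncmon Y q w)"

end

theory Submission
  imports Defs "HOL-Analysis.Analysis"
begin

definition delta :: "nat list \<Rightarrow> ncser" where "delta q w = (if w = q then 1 else 0)"
definition shl :: "nat \<Rightarrow> ncser \<Rightarrow> ncser" where "shl x P w = P (x # w)"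

lemma ncmult_Nil[simp]: "ncmult P Q [] = P [] * Q []"
  by (simp add: ncmult_def)

lemma ncmult_Cons: "ncmult P Q (x#w) = P [] * Q (x#w) + ncmult (shl x P) Q w"
  unfolding ncmult_def shl_def
  by (simp add: sum.atMost_Suc_shift del: sum.atMost_Suc)

lemma ncmult_lin_left: "ncmult (\<lambda>w. a * F w + G w) R w = a * ncmult F R w + ncmult G R w"
  unfolding ncmult_def by (simp add: sum_distrib_left sum.distrib algebra_simps)

lemma ncmult_assoc: "ncmult (ncmult P Q) R w = ncmult P (ncmult Q R) w"
proof (induction w arbitrary: P Q R)
  case Nil then show ?case by simp
next
  case (Cons x w)
  have sh: "shl x (ncmult P Q) = (\<lambda>w. P [] * shl x Q w + ncmult (shl x P) Q w)"
    by (rule ext) (simp add: shl_def ncmult_Cons)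
  have "ncmult (ncmult P Q) R (x#w) = P [] * Q [] * R (x#w) + (P [] * ncmult (shl x Q) R w + ncmult (ncmult (shl x P) Q) R w)"
    by (simp add: ncmult_Cons sh ncmult_lin_left)
  also have "\<dots> = ncmult P (ncmult Q R) (x#w)"
    by (simp add: ncmult_Cons Cons.IH algebra_simps)
  finally show ?case .
qed

lemma ncmult_zero_left: "ncmult (\<lambda>_. 0) P w = 0"
  by (simp add: ncmult_def)

lemma ncmult_one_left: "ncmult ncone P w = P w"
proof (cases w)
  case Nil then show ?thesis by (simp add: ncone_def)
next
  case (Cons x w')
  have "shl x ncone = (\<lambda>_. 0)" by (rule ext) (simp add: shl_def ncone_def)
  then show ?thesis using Cons by (simp add: ncmult_Cons ncone_def ncmult_zero_left)
qed

lemma ncmult_one_right: "ncmult P ncone w = P w"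
proof (induction w arbitrary: P)
  case Nil then show ?case by (simp add: ncone_def)
next
  case (Cons x w) then show ?case by (simp add: ncmult_Cons ncone_def shl_def)
qed

lemma ncmon_Nil[simp]: "ncmon Y [] = ncone" by (simp add: ncmon_def)
lemma ncmon_Cons: "ncmon Y (j#q) = ncmult (Y j) (ncmon Y q)" by (simp add: ncmon_def)

lemma ncmon_append: "ncmon Y (u@v) = ncmult (ncmon Y u) (ncmon Y v)"
proof (induction u)
  case Nil then show ?case by (simp add: fun_eq_iff ncmult_one_left)
next
  case (Cons j u) show ?case by (rule ext) (simp add: ncmon_Cons Cons.IH ncmult_assoc)
qed

lemma ncmon_gen: "ncmon ncgen q = delta q"
proof (induction q)
  case Nil then show ?case by (simp add: fun_eq_iff delta_def ncone_def)
next
  case (Cons j q)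
  show ?case
  proof (rule ext)
    fix w show "ncmon ncgen (j#q) w = delta (j#q) w"
    proof (cases w)
      case Nil then show ?thesis by (simp add: ncmon_Cons Cons delta_def ncgen_def)
    next
      case (Cons x w')
      have "shl x (ncgen j) = (if x = j then ncone else (\<lambda>_. 0))"
        by (rule ext) (simp add: shl_def ncgen_def ncone_def)
      then show ?thesis using Cons \<open>ncmon ncgen q = delta q\<close>
        by (simp add: ncmon_Cons ncmult_Cons ncgen_def ncmult_one_left ncmult_zero_left delta_def)
    qed
  qed
qed

lemma pairsum: "((\<lambda>(u,v). P u * Q v * delta (u@v) w) has_sum ncmult P Q w) UNIV"
proof -
  let ?S = "(\<lambda>i. (take i w, drop i w)) ` {..length w}"
  have inj: "inj_on (\<lambda>i. (take i w, drop i w)) {..length w}"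
    by (rule inj_onI) (metis Pair_inject atMost_iff length_take min.absorb2)
  have out: "(\<lambda>(u,v). P u * Q v * delta (u@v) w) x = 0" if "x \<in> UNIV - ?S" for x
  proof (cases x)
    case (Pair u v)
    have "u @ v \<noteq> w"
    proof
      assume h: "u @ v = w"
      then have "x = (\<lambda>i. (take i w, drop i w)) (length u)" using Pair by auto
      moreover have "length u \<in> {..length w}" using h by auto
      ultimately show False using that by blast
    qed
    then show ?thesis using Pair by (simp add: delta_def)
  qed
  have "((\<lambda>(u,v). P u * Q v * delta (u@v) w) has_sum ncmult P Q w) ?S"
  proof (rule has_sum_finiteI)
    show "finite ?S" by simp
    show "ncmult P Q w = sum (\<lambda>(u,v). P u * Q v * delta (u@v) w) ?S"
      by (simp add: sum.reindex[OF inj] ncmult_def delta_def)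
  qed
  then show ?thesis using has_sum_cong_neutral[of UNIV ?S] out by (smt (verit) Diff_iff UNIV_I empty_iff subset_iff)
qed


definition nsm :: "real \<Rightarrow> ncser \<Rightarrow> bool" where
  "nsm A P \<longleftrightarrow> (\<lambda>w. norm (P w) * A ^ length w) summable_on UNIV"

lemma ncnorm_nonneg: "A \<ge> 0 \<Longrightarrow> 0 \<le> ncnorm A P"
  unfolding ncnorm_def by (rule infsum_nonneg) simp

lemma coef_le: assumes "A \<ge> 0" "nsm A P" shows "norm (P w) * A ^ length w \<le> ncnorm A P"
proof -
  have "sum (\<lambda>w. norm (P w) * A ^ length w) {w} \<le> ncnorm A P"
    unfolding ncnorm_def
    by (rule finite_sum_le_infsum) (use assms in \<open>auto simp: nsm_def\<close>)
  then show ?thesis by simp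
qed

lemma nsm_comb:
  assumes "A \<ge> 0" "nsm A P" "nsm A Q"
  shows "nsm A (\<lambda>w. a * P w + b * Q w)"
    "ncnorm A (\<lambda>w. a * P w + b * Q w) \<le> norm a * ncnorm A P + norm b * ncnorm A Q"
proof -
  let ?f = "\<lambda>w. norm (a * P w + b * Q w) * A ^ length w"
  let ?g = "\<lambda>w. norm a * (norm (P w) * A ^ length w) + norm b * (norm (Q w) * A ^ length w)"
  have sg: "?g summable_on UNIV"
    using assms by (intro summable_on_add summable_on_cmult_right) (auto simp: nsm_def)
  have le: "?f w \<le> ?g w" for w
  proof -
    have "norm (a * P w + b * Q w) \<le> norm a * norm (P w) + norm b * norm (Q w)"
      by (metis norm_mult norm_triangle_ineq)
    then show ?thesis using assms(1)
      by (metis (no_types, lifting) distrib_right mult.assoc mult_right_mono zero_le_power)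
  qed
  show sf: "nsm A (\<lambda>w. a * P w + b * Q w)" unfolding nsm_def
    by (rule summable_on_comparison_test[OF sg]) (use le assms in auto)
  have "ncnorm A (\<lambda>w. a * P w + b * Q w) \<le> infsum ?g UNIV"
    unfolding ncnorm_def by (rule infsum_mono[OF sf[unfolded nsm_def] sg]) (rule le)
  also have "infsum ?g UNIV = norm a * ncnorm A P + norm b * ncnorm A Q"
    using assms unfolding ncnorm_def nsm_def
    by (subst infsum_add) (auto intro!: summable_on_cmult_right simp: infsum_cmult_right)
  finally show "ncnorm A (\<lambda>w. a * P w + b * Q w) \<le> norm a * ncnorm A P + norm b * ncnorm A Q" .
qed

lemma nsm_diff:
  assumes "A \<ge> 0" "nsm A P" "nsm A Q"
  shows "nsm A (\<lambda>w. P w - Q w)" "ncnorm A (\<lambda>w. P w - Q w) \<le> ncnorm A P + ncnorm A Q"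
  using nsm_comb[OF assms, of 1 "-1"] by auto

lemma nsm_add:
  assumes "A \<ge> 0" "nsm A P" "nsm A Q"
  shows "nsm A (\<lambda>w. P w + Q w)" "ncnorm A (\<lambda>w. P w + Q w) \<le> ncnorm A P + ncnorm A Q"
  using nsm_comb[OF assms, of 1 1] by auto

lemma nsm_mono:
  assumes "0 \<le> a" "a \<le> b" "nsm b P"
  shows "nsm a P" "ncnorm a P \<le> ncnorm b P"
proof -
  have le: "norm (P w) * a ^ length w \<le> norm (P w) * b ^ length w" for w
    using assms by (intro mult_left_mono power_mono) auto
  show s: "nsm a P" using assms unfolding nsm_def
    by (intro summable_on_comparison_test[OF assms(3)[unfolded nsm_def]]) (use le in auto)
  show "ncnorm a P \<le> ncnorm b P" unfolding ncnorm_def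
    using s assms le unfolding nsm_def by (intro infsum_mono) auto
qed

lemma ncnorm_eq0:
  assumes "A > 0" "nsm A P" "ncnorm A P \<le> 0" shows "P w = 0"
proof -
  have "norm (P w) * A ^ length w \<le> 0" using coef_le[of A P w] assms by auto
  moreover have "A ^ length w > 0" using assms by simp
  ultimately show ?thesis by (simp add: mult_le_0_iff)
qed

lemma delta_hs: "((\<lambda>w. norm (delta q w) * A ^ length w) has_sum A ^ length q) UNIV"
proof -
  have "((\<lambda>w. norm (delta q w) * A ^ length w) has_sum A ^ length q) {q}"
    by (rule has_sum_finiteI) (simp_all add: delta_def)
  then show ?thesis by (rule has_sum_cong_neutral[THEN iffD1, rotated -1]) (auto simp: delta_def)
qed

lemma nsm_delta: "nsm A (delta q)" "ncnorm A (delta q) = A ^ length q"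
  using delta_hs[of q A] unfolding nsm_def ncnorm_def by (auto simp: has_sum_iff)

lemma ncgen_delta: "ncgen j = delta [j]" by (simp add: fun_eq_iff ncgen_def delta_def)
lemma ncone_delta: "ncone = delta []" by (simp add: fun_eq_iff ncone_def delta_def)


lemma master:
  fixes c :: "'q \<Rightarrow> complex" and D :: "'q \<Rightarrow> ncser"
  assumes A: "A > 0" and h1: "\<And>q. c q \<noteq> 0 \<Longrightarrow> nsm A (D q)"
    and h2: "(\<lambda>q. norm (c q) * ncnorm A (D q)) summable_on UNIV"
  shows master_summ: "\<And>w. (\<lambda>q. c q * D q w) summable_on UNIV"
    and master_nsm: "nsm A (\<lambda>w. \<Sum>\<^sub>\<infinity>q. c q * D q w)"
    and master_le: "ncnorm A (\<lambda>w. \<Sum>\<^sub>\<infinity>q. c q * D q w) \<le> (\<Sum>\<^sub>\<infinity>q. norm (c q) * ncnorm A (D q))"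
proof -
  define g where "g = (\<lambda>(q,w). norm (c q) * (norm (D q w) * A ^ length w))"
  have inner: "((\<lambda>w. g (q,w)) has_sum norm (c q) * ncnorm A (D q)) UNIV" for q
  proof (cases "c q = 0")
    case True then show ?thesis by (simp add: g_def)
  next
    case False
    then have "((\<lambda>w. norm (D q w) * A ^ length w) has_sum ncnorm A (D q)) UNIV"
      using h1 unfolding nsm_def ncnorm_def by simp
    then show ?thesis unfolding g_def by (simp add: has_sum_cmult_right)
  qed
  have gnn: "0 \<le> g x" for x unfolding g_def using A by (auto simp: case_prod_unfold)
  have gS: "g summable_on (UNIV \<times> UNIV)"
    using summable_on_SigmaI[where A=UNIV and B="\<lambda>_. UNIV", OF inner h2] gnn by auto
  then have gS': "(\<lambda>(w,q). g (q,w)) summable_on (UNIV \<times> UNIV)"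
    by (subst (asm) summable_on_swap) simp
  have gw: "(\<lambda>q. g (q,w)) summable_on UNIV" for w
    using summable_on_SigmaD1[of "\<lambda>w q. g (q,w)" UNIV "\<lambda>_. UNIV" w] gS' by auto
  have Apos: "A ^ length w > 0" for w using A by simp
  have nb: "norm (c q * D q w) \<le> g (q,w) / A ^ length w" for q w
    using Apos[of w] A by (simp add: g_def norm_mult field_simps)
  have absm: "(\<lambda>q. norm (c q * D q w)) summable_on UNIV" for w
  proof -
    have gg: "(\<lambda>q. g (q,w) / A ^ length w) summable_on UNIV"
      using gw[of w] by (simp add: divide_inverse summable_on_cmult_left)
    show ?thesis
      by (rule summable_on_comparison_test[OF gg]) (use nb in auto)
  qed
  show sm: "(\<lambda>q. c q * D q w) summable_on UNIV" for w
    using summable_on_iff_abs_summable_on_complex absm by blast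
  have cw: "norm (\<Sum>\<^sub>\<infinity>q. c q * D q w) * A ^ length w \<le> (\<Sum>\<^sub>\<infinity>q. g (q,w))" for w
  proof -
    have "norm (\<Sum>\<^sub>\<infinity>q. c q * D q w) \<le> (\<Sum>\<^sub>\<infinity>q. norm (c q * D q w))"
      by (rule norm_infsum_bound) (rule absm)
    also have "\<dots> \<le> (\<Sum>\<^sub>\<infinity>q. g (q,w) / A ^ length w)"
    proof (rule infsum_mono)
      show "(\<lambda>q. norm (c q * D q w)) summable_on UNIV" by (rule absm)
      show "(\<lambda>q. g (q,w) / A ^ length w) summable_on UNIV"
        using gw[of w] by (simp add: divide_inverse summable_on_cmult_left)
    qed (rule nb)
    also have "\<dots> = (\<Sum>\<^sub>\<infinity>q. g (q,w)) / A ^ length w"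
      by (simp add: divide_inverse infsum_cmult_left')
    finally show ?thesis using Apos[of w] by (simp add: field_simps)
  qed
  have outer: "(\<lambda>w. \<Sum>\<^sub>\<infinity>q. g (q,w)) summable_on UNIV"
    using summable_on_Sigma_banach[of "\<lambda>w q. g (q,w)" UNIV "\<lambda>_. UNIV"] gS' by auto
  show ns: "nsm A (\<lambda>w. \<Sum>\<^sub>\<infinity>q. c q * D q w)" unfolding nsm_def
    by (rule summable_on_comparison_test[OF outer]) (use cw A in auto)
  have "ncnorm A (\<lambda>w. \<Sum>\<^sub>\<infinity>q. c q * D q w) \<le> (\<Sum>\<^sub>\<infinity>w. \<Sum>\<^sub>\<infinity>q. g (q,w))"
    unfolding ncnorm_def by (rule infsum_mono[OF ns[unfolded nsm_def] outer]) (rule cw)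
  also have "\<dots> = (\<Sum>\<^sub>\<infinity>q. \<Sum>\<^sub>\<infinity>w. g (q,w))"
    by (rule infsum_swap_banach) (use gS' in auto)
  also have "\<dots> = (\<Sum>\<^sub>\<infinity>q. norm (c q) * ncnorm A (D q))"
    by (rule infsum_cong) (use inner in \<open>auto simp: has_sum_iff\<close>)
  finally show "ncnorm A (\<lambda>w. \<Sum>\<^sub>\<infinity>q. c q * D q w) \<le> (\<Sum>\<^sub>\<infinity>q. norm (c q) * ncnorm A (D q))" .
qed

lemma prod_hs_real:
  fixes f g :: "'a \<Rightarrow> real"
  assumes "\<And>x. f x \<ge> 0" "\<And>x. g x \<ge> 0" "f summable_on UNIV" "g summable_on UNIV"
  shows "((\<lambda>(u,v). f u * g v) has_sum (infsum f UNIV * infsum g UNIV)) UNIV"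
proof -
  have inner: "((\<lambda>v. f u * g v) has_sum f u * infsum g UNIV) UNIV" for u
    using assms by (intro has_sum_cmult_right) auto
  have outer: "((\<lambda>u. f u * infsum g UNIV) has_sum infsum f UNIV * infsum g UNIV) UNIV"
    using assms by (intro has_sum_cmult_left) auto
  have "(\<lambda>(u,v). f u * g v) summable_on Sigma UNIV (\<lambda>_. UNIV)"
    by (rule summable_on_SigmaI[where g="\<lambda>u. f u * infsum g UNIV"])
      (use inner outer assms in \<open>auto intro: has_sum_imp_summable\<close>)
  then have "((\<lambda>(u,v). f u * g v) has_sum (infsum f UNIV * infsum g UNIV)) (Sigma UNIV (\<lambda>_. UNIV))"
    by (intro has_sum_SigmaI[OF _ outer]) (use inner in auto)
  then show ?thesis by simp
qed

lemma prod_hs_complex: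
  fixes a b :: "'a \<Rightarrow> complex"
  assumes "a summable_on UNIV" "b summable_on UNIV"
  shows "((\<lambda>(u,v). a u * b v) has_sum (infsum a UNIV * infsum b UNIV)) UNIV"
proof -
  have na: "(\<lambda>u. norm (a u)) summable_on UNIV" and nb: "(\<lambda>u. norm (b u)) summable_on UNIV"
    using assms summable_on_iff_abs_summable_on_complex by blast+
  have "(\<lambda>(u,v). norm (a u) * norm (b v)) summable_on UNIV"
    using prod_hs_real[OF _ _ na nb] has_sum_imp_summable by auto
  then have "(\<lambda>x. norm ((\<lambda>(u,v). a u * b v) x)) summable_on UNIV"
    by (simp add: case_prod_unfold norm_mult)
  then have s: "(\<lambda>(u,v). a u * b v) summable_on Sigma UNIV (\<lambda>_. UNIV)"
    using summable_on_iff_abs_summable_on_complex by auto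
  have inner: "((\<lambda>v. a u * b v) has_sum a u * infsum b UNIV) UNIV" for u
    using assms by (intro has_sum_cmult_right) auto
  have outer: "((\<lambda>u. a u * infsum b UNIV) has_sum infsum a UNIV * infsum b UNIV) UNIV"
    using assms by (intro has_sum_cmult_left) auto
  have "((\<lambda>(u,v). a u * b v) has_sum (infsum a UNIV * infsum b UNIV)) (Sigma UNIV (\<lambda>_. UNIV))"
    by (intro has_sum_SigmaI[OF _ outer s]) (use inner in auto)
  then show ?thesis by simp
qed

lemma ncmult_eq_infsum: "ncmult P Q w = (\<Sum>\<^sub>\<infinity>x. (\<lambda>(u,v). P u * Q v) x * delta (case x of (u,v) \<Rightarrow> u @ v) w)"
  using pairsum[of P Q w] by (simp add: has_sum_iff case_prod_unfold)

lemma nsm_mult: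
  assumes a: "a > 0" and P: "nsm a P" and Q: "nsm a Q"
  shows "nsm a (ncmult P Q)" "ncnorm a (ncmult P Q) \<le> ncnorm a P * ncnorm a Q"
proof -
  let ?c = "\<lambda>(u,v). P u * Q v" and ?D = "\<lambda>(u::nat list,v). delta (u @ v)"
  have e: "ncmult P Q = (\<lambda>w. \<Sum>\<^sub>\<infinity>x. ?c x * ?D x w)"
    by (rule ext) (simp add: ncmult_eq_infsum case_prod_unfold)
  have hs: "((\<lambda>(u,v). (norm (P u) * a ^ length u) * (norm (Q v) * a ^ length v)) has_sum ncnorm a P * ncnorm a Q) UNIV"
    unfolding ncnorm_def using P Q a unfolding nsm_def by (intro prod_hs_real) auto
  have eq: "(\<lambda>x. norm (?c x) * ncnorm a (?D x)) = (\<lambda>(u,v). (norm (P u) * a ^ length u) * (norm (Q v) * a ^ length v))"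
    by (auto simp: fun_eq_iff nsm_delta norm_mult power_add)
  have h2: "(\<lambda>x. norm (?c x) * ncnorm a (?D x)) summable_on UNIV"
    unfolding eq by (rule has_sum_imp_summable[OF hs])
  have h1: "nsm a (?D x)" for x by (simp add: case_prod_unfold nsm_delta)
  show "nsm a (ncmult P Q)" unfolding e by (rule master_nsm[OF a h1 h2])
  have "ncnorm a (ncmult P Q) \<le> (\<Sum>\<^sub>\<infinity>x. norm (?c x) * ncnorm a (?D x))"
    unfolding e by (rule master_le[OF a h1 h2])
  also have "\<dots> = ncnorm a P * ncnorm a Q" unfolding eq by (rule infsumI[OF hs])
  finally show "ncnorm a (ncmult P Q) \<le> ncnorm a P * ncnorm a Q" .
qed

lemma mon_bound:
  assumes a: "a > 0" and Y: "\<And>i. nsm a (Y i)" "\<And>i. ncnorm a (Y i) \<le> R"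
  shows "nsm a (ncmon Y q) \<and> ncnorm a (ncmon Y q) \<le> R ^ length q"
proof -
  have R: "R \<ge> 0" using ncnorm_nonneg[of a "Y 0"] Y(2)[of 0] a by linarith
  show ?thesis
proof (induction q)
  case Nil then show ?case by (simp add: ncone_delta nsm_delta)
next
  case (Cons j q)
  have "ncnorm a (ncmon Y (j#q)) \<le> ncnorm a (Y j) * ncnorm a (ncmon Y q)"
    unfolding ncmon_Cons using nsm_mult[OF a Y(1) ] Cons by auto
  also have "\<dots> \<le> R * R ^ length q"
    using Cons Y(2)[of j] ncnorm_nonneg[of a] a R by (intro mult_mono) auto
  finally show ?case unfolding ncmon_Cons using nsm_mult[OF a Y(1)] Cons by auto
qed
qed

lemma ncsubst_fun: "ncsubst P Y = (\<lambda>w. \<Sum>\<^sub>\<infinity>q. P q * ncmon Y q w)"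
  by (rule ext) (simp add: ncsubst_def)

lemma sub_props:
  assumes a: "a > 0" and Y: "\<And>i. nsm a (Y i)" "\<And>i. ncnorm a (Y i) \<le> R"
    and R: "R \<ge> 0" and P: "nsm R P"
  shows sub_summ: "\<And>w. (\<lambda>q. P q * ncmon Y q w) summable_on UNIV"
    and sub_nsm: "nsm a (ncsubst P Y)"
    and sub_le: "ncnorm a (ncsubst P Y) \<le> ncnorm R P"
proof -
  have mb: "nsm a (ncmon Y q) \<and> ncnorm a (ncmon Y q) \<le> R ^ length q" for q
    using mon_bound[of a Y R] a Y by blast
  have h1: "nsm a (ncmon Y q)" for q using mb by blast
  have le: "norm (P q) * ncnorm a (ncmon Y q) \<le> norm (P q) * R ^ length q" for q
    using mb[of q] by (intro mult_left_mono) auto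
  have h2: "(\<lambda>q. norm (P q) * ncnorm a (ncmon Y q)) summable_on UNIV"
    using P unfolding nsm_def
    by (rule summable_on_comparison_test) (use le a ncnorm_nonneg in auto)
  show "(\<lambda>q. P q * ncmon Y q w) summable_on UNIV" for w by (rule master_summ[OF a h1 h2])
  show "nsm a (ncsubst P Y)" unfolding ncsubst_fun by (rule master_nsm[OF a h1 h2])
  have "ncnorm a (ncsubst P Y) \<le> (\<Sum>\<^sub>\<infinity>q. norm (P q) * ncnorm a (ncmon Y q))"
    unfolding ncsubst_fun by (rule master_le[OF a h1 h2])
  also have "\<dots> \<le> (\<Sum>\<^sub>\<infinity>q. norm (P q) * R ^ length q)"
    by (rule infsum_mono[OF h2 P[unfolded nsm_def]]) (rule le)
  also have "\<dots> = ncnorm R P" by (simp add: ncnorm_def)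
  finally show "ncnorm a (ncsubst P Y) \<le> ncnorm R P" .
qed


lemma has_sum_single:
  assumes "\<And>x. x \<noteq> a \<Longrightarrow> f x = 0"
  shows "(f has_sum f a) UNIV"
proof -
  have "(f has_sum f a) {a}" by (rule has_sum_finiteI) auto
  then show ?thesis by (rule has_sum_cong_neutral[THEN iffD1, rotated -1]) (use assms in auto)
qed

lemma infsum_single:
  assumes "\<And>x. x \<noteq> a \<Longrightarrow> f x = 0"
  shows "infsum f UNIV = f a"
  by (rule infsumI[OF has_sum_single[OF assms]])

lemma sub_delta: "ncsubst (delta q) Y = ncmon Y q"
  by (rule ext) (simp add: ncsubst_def, subst infsum_single[of q], auto simp: delta_def)

lemma sub_gen_id: "ncsubst P ncgen = P"
  by (rule ext) (simp add: ncsubst_def ncmon_gen, subst infsum_single, auto simp: delta_def)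

lemma sub_one: "ncsubst ncone Y = ncone"
  by (simp add: ncone_delta sub_delta)

lemma sub_gen: "ncsubst (ncgen j) Y = Y j"
  by (rule ext) (simp add: ncgen_delta sub_delta ncmon_Cons ncmult_one_right)

lemma has_sum_sum_fin:
  fixes f :: "'i \<Rightarrow> 'a \<Rightarrow> complex"
  assumes "finite I" "\<And>i. i \<in> I \<Longrightarrow> ((f i) has_sum s i) UNIV"
  shows "((\<lambda>x. \<Sum>i\<in>I. f i x) has_sum (\<Sum>i\<in>I. s i)) UNIV"
  using assms
proof (induction I rule: finite_induct)
  case empty then show ?case by simp
next
  case (insert i I)
  then show ?case by (simp add: has_sum_add)
qed

lemma dbl_summ:
  fixes c :: "'q \<Rightarrow> complex" and D :: "'q \<Rightarrow> ncser"
  assumes A: "A \<ge> 0" and h1: "\<And>q. c q \<noteq> 0 \<Longrightarrow> nsm A (D q)"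
    and h2: "(\<lambda>q. norm (c q) * ncnorm A (D q)) summable_on UNIV"
  shows "(\<lambda>(q,w). norm (c q) * (norm (D q w) * A ^ length w)) summable_on UNIV"
proof -
  define g where "g = (\<lambda>(q,w). norm (c q) * (norm (D q w) * A ^ length w))"
  have inner: "((\<lambda>w. g (q,w)) has_sum norm (c q) * ncnorm A (D q)) UNIV" for q
  proof (cases "c q = 0")
    case True then show ?thesis by (simp add: g_def)
  next
    case False
    then have "((\<lambda>w. norm (D q w) * A ^ length w) has_sum ncnorm A (D q)) UNIV"
      using h1 unfolding nsm_def ncnorm_def by simp
    then show ?thesis unfolding g_def by (simp add: has_sum_cmult_right)
  qed
  have gnn: "0 \<le> g x" for x unfolding g_def using A by (auto simp: case_prod_unfold)
  have "g summable_on (UNIV \<times> UNIV)"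
    using summable_on_SigmaI[where A=UNIV and B="\<lambda>_. UNIV", OF inner h2] gnn by auto
  then show ?thesis unfolding g_def by simp
qed

lemma sub_sum:
  fixes c :: "'q \<Rightarrow> complex" and D :: "'q \<Rightarrow> ncser"
  assumes a: "a > 0" and Y: "\<And>i. nsm a (Y i)" "\<And>i. ncnorm a (Y i) \<le> R" and R: "R > 0"
    and h1: "\<And>q. c q \<noteq> 0 \<Longrightarrow> nsm R (D q)"
    and h2: "(\<lambda>q. norm (c q) * ncnorm R (D q)) summable_on UNIV"
  shows "ncsubst (\<lambda>r. \<Sum>\<^sub>\<infinity>q. c q * D q r) Y w = (\<Sum>\<^sub>\<infinity>q. c q * ncsubst (D q) Y w)"
proof -
  have mb: "nsm a (ncmon Y r) \<and> ncnorm a (ncmon Y r) \<le> R ^ length r" for r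
    using mon_bound[of a Y R] a Y by blast
  have yb: "norm (ncmon Y r w) \<le> R ^ length r / a ^ length w" for r
  proof -
    have "norm (ncmon Y r w) * a ^ length w \<le> R ^ length r"
      using coef_le[of a "ncmon Y r" w] mb[of r] a by auto
    then show ?thesis using a by (simp add: field_simps)
  qed
  define f where "f = (\<lambda>(q,r). c q * D q r * ncmon Y r w)"
  have gs: "(\<lambda>(q,r). norm (c q) * (norm (D q r) * R ^ length r)) summable_on UNIV"
    by (rule dbl_summ) (use R h1 h2 in auto)
  then have gs': "(\<lambda>x. (\<lambda>(q,r). norm (c q) * (norm (D q r) * R ^ length r)) x * (1 / a ^ length w)) summable_on UNIV"
    by (rule summable_on_cmult_left)
  have "(\<lambda>x. norm (f x)) summable_on UNIV"
  proof (rule summable_on_comparison_test[OF gs'])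
    fix x show "norm (f x) \<le> (\<lambda>(q,r). norm (c q) * (norm (D q r) * R ^ length r)) x * (1 / a ^ length w)"
    proof (cases x)
      case (Pair q r)
      have "norm (f x) = norm (c q) * norm (D q r) * norm (ncmon Y r w)"
        using Pair by (simp add: f_def norm_mult)
      also have "\<dots> \<le> norm (c q) * norm (D q r) * (R ^ length r / a ^ length w)"
        by (intro mult_left_mono yb) auto
      finally show ?thesis using Pair by simp
    qed
  qed simp
  then have fs: "f summable_on (UNIV \<times> UNIV)"
    using summable_on_iff_abs_summable_on_complex by auto
  have summ_q: "(\<lambda>q. c q * D q r) summable_on UNIV" for r
    by (rule master_summ[OF R h1 h2])
  have summ_r: "(\<lambda>r. D q r * ncmon Y r w) summable_on UNIV" if "c q \<noteq> 0" for q
    by (rule sub_summ[of a Y R "D q"]) (use a Y R h1[OF that] in auto)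
  have "ncsubst (\<lambda>r. \<Sum>\<^sub>\<infinity>q. c q * D q r) Y w = (\<Sum>\<^sub>\<infinity>r. \<Sum>\<^sub>\<infinity>q. c q * D q r * ncmon Y r w)"
    unfolding ncsubst_def by (simp add: infsum_cmult_left')
  also have "\<dots> = (\<Sum>\<^sub>\<infinity>q. \<Sum>\<^sub>\<infinity>r. c q * D q r * ncmon Y r w)"
    using infsum_swap_banach[of "\<lambda>q r. c q * D q r * ncmon Y r w" UNIV UNIV] fs
    unfolding f_def by simp
  also have "\<dots> = (\<Sum>\<^sub>\<infinity>q. c q * ncsubst (D q) Y w)"
    unfolding ncsubst_def by (simp add: infsum_cmult_right' mult.assoc)
  finally show ?thesis .
qed


lemma sub_mult:
  assumes a: "a > 0" and Y: "\<And>i. nsm a (Y i)" "\<And>i. ncnorm a (Y i) \<le> R" and R: "R > 0"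
    and U: "nsm R U" and V: "nsm R V"
  shows "ncsubst (ncmult U V) Y w = ncmult (ncsubst U Y) (ncsubst V Y) w"
proof -
  let ?c = "\<lambda>(u,v). U u * V v" and ?D = "\<lambda>(u::nat list,v). delta (u @ v)"
  have e: "ncmult U V = (\<lambda>r. \<Sum>\<^sub>\<infinity>x. ?c x * ?D x r)"
    by (rule ext) (simp add: ncmult_eq_infsum case_prod_unfold)
  have hs: "((\<lambda>(u,v). (norm (U u) * R ^ length u) * (norm (V v) * R ^ length v)) has_sum ncnorm R U * ncnorm R V) UNIV"
    unfolding ncnorm_def using U V R unfolding nsm_def by (intro prod_hs_real) auto
  have eq: "(\<lambda>x. norm (?c x) * ncnorm R (?D x)) = (\<lambda>(u,v). (norm (U u) * R ^ length u) * (norm (V v) * R ^ length v))"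
    by (auto simp: fun_eq_iff nsm_delta norm_mult power_add)
  have h2: "(\<lambda>x. norm (?c x) * ncnorm R (?D x)) summable_on UNIV"
    unfolding eq by (rule has_sum_imp_summable[OF hs])
  have h1: "nsm R (?D x)" for x by (simp add: case_prod_unfold nsm_delta)
  have L: "ncsubst (ncmult U V) Y w = (\<Sum>\<^sub>\<infinity>x. ?c x * ncsubst (?D x) Y w)"
    unfolding e by (rule sub_sum[OF a Y(1) Y(2) R h1 h2])
  also have "\<dots> = (\<Sum>\<^sub>\<infinity>(u,v). U u * V v * ncmult (ncmon Y u) (ncmon Y v) w)"
    by (rule infsum_cong) (auto simp: sub_delta ncmon_append)
  also have "\<dots> = ncmult (ncsubst U Y) (ncsubst V Y) w"
  proof (rule infsumI)
    let ?F = "\<lambda>i (u,v). (U u * ncmon Y u (take i w)) * (V v * ncmon Y v (drop i w))"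
    have each: "(?F i has_sum (ncsubst U Y (take i w) * ncsubst V Y (drop i w))) UNIV" for i
      unfolding ncsubst_def
      by (rule prod_hs_complex; rule sub_summ[of a Y R]) (use a Y R U V in auto)
    have "((\<lambda>x. \<Sum>i\<in>{..length w}. ?F i x) has_sum (\<Sum>i\<in>{..length w}. ncsubst U Y (take i w) * ncsubst V Y (drop i w))) UNIV"
      by (rule has_sum_sum_fin) (use each in auto)
    moreover have "(\<lambda>x. \<Sum>i\<in>{..length w}. ?F i x) = (\<lambda>(u,v). U u * V v * ncmult (ncmon Y u) (ncmon Y v) w)"
      by (auto simp: fun_eq_iff ncmult_def sum_distrib_left algebra_simps)
    ultimately show "((\<lambda>(u,v). U u * V v * ncmult (ncmon Y u) (ncmon Y v) w) has_sum ncmult (ncsubst U Y) (ncsubst V Y) w) UNIV"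
      by (simp add: ncmult_def)
  qed
  finally show ?thesis .
qed

lemma sub_mon:
  assumes a: "a > 0" and Y: "\<And>i. nsm a (Y i)" "\<And>i. ncnorm a (Y i) \<le> R" and R: "R > 0"
    and G: "\<And>i. nsm R (G i)" "\<And>i. ncnorm R (G i) \<le> M"
  shows "ncsubst (ncmon G q) Y = ncmon (\<lambda>i. ncsubst (G i) Y) q"
proof (induction q)
  case Nil then show ?case by (simp add: sub_one)
next
  case (Cons j q)
  have "nsm R (ncmon G q)" using mon_bound[of R G M] R G by blast
  then show ?case
    by (simp add: ncmon_Cons fun_eq_iff sub_mult[OF a Y(1) Y(2) R G(1)] Cons.IH)
qed

lemma sub_comp:
  assumes a: "a > 0" and Y: "\<And>i. nsm a (Y i)" "\<And>i. ncnorm a (Y i) \<le> R" and R: "R > 0"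
    and G: "\<And>i. nsm R (G i)" "\<And>i. ncnorm R (G i) \<le> M" and P: "nsm M P"
  shows "ncsubst (ncsubst P G) Y w = ncsubst P (\<lambda>i. ncsubst (G i) Y) w"
proof -
  have mb: "nsm R (ncmon G q) \<and> ncnorm R (ncmon G q) \<le> M ^ length q" for q
    using mon_bound[of R G M] R G by blast
  have h1: "nsm R (ncmon G q)" for q using mb by blast
  have le: "norm (P q) * ncnorm R (ncmon G q) \<le> norm (P q) * M ^ length q" for q
    using mb[of q] by (intro mult_left_mono) auto
  have h2: "(\<lambda>q. norm (P q) * ncnorm R (ncmon G q)) summable_on UNIV"
    using P unfolding nsm_def
    by (rule summable_on_comparison_test) (use le R ncnorm_nonneg in auto)
  have "ncsubst (ncsubst P G) Y w = (\<Sum>\<^sub>\<infinity>q. P q * ncsubst (ncmon G q) Y w)"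
    unfolding ncsubst_fun[of P G] by (rule sub_sum[OF a Y(1) Y(2) R h1 h2])
  also have "\<dots> = ncsubst P (\<lambda>i. ncsubst (G i) Y) w"
    by (simp add: ncsubst_def sub_mon[OF a Y(1) Y(2) R G(1) G(2)])
  finally show ?thesis .
qed


lemma ncmult_diff_id:
  "ncmult G Gq w - ncmult H Hq w =
   ncmult G (\<lambda>x. Gq x - Hq x) w + ncmult (\<lambda>x. G x - H x) Hq w"
  unfolding ncmult_def by (simp add: sum_subtractf[symmetric] sum.distrib[symmetric] algebra_simps)

lemma mon_lip:
  assumes a: "a > 0"
    and G: "\<And>i. nsm a (G i)" "\<And>i. ncnorm a (G i) \<le> M"
    and H: "\<And>i. nsm a (H i)" "\<And>i. ncnorm a (H i) \<le> M"
    and d: "\<And>i. ncnorm a (\<lambda>w. G i w - H i w) \<le> d"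
  shows "ncnorm a (\<lambda>w. ncmon G q w - ncmon H q w) \<le> real (length q) * M ^ (length q - 1) * d"
proof (induction q)
  case Nil then show ?case by (simp add: ncnorm_def)
next
  case (Cons j q)
  have M: "M \<ge> 0" using ncnorm_nonneg[of a "G 0"] G(2)[of 0] a by linarith
  have d0: "d \<ge> 0" using ncnorm_nonneg[of a "\<lambda>w. G 0 w - H 0 w"] d[of 0] a by linarith
  have mG: "nsm a (ncmon G q) \<and> ncnorm a (ncmon G q) \<le> M ^ length q" using mon_bound[of a G M] a G by blast
  have mH: "nsm a (ncmon H q) \<and> ncnorm a (ncmon H q) \<le> M ^ length q" using mon_bound[of a H M] a H by blast
  have s1: "nsm a (\<lambda>x. ncmon G q x - ncmon H q x)" using nsm_diff(1)[of a] mG mH a by auto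
  have s2: "nsm a (\<lambda>x. G j x - H j x)" using nsm_diff(1)[of a] G H a by auto
  have eq: "(\<lambda>w. ncmon G (j#q) w - ncmon H (j#q) w) =
     (\<lambda>w. ncmult (G j) (\<lambda>x. ncmon G q x - ncmon H q x) w + ncmult (\<lambda>x. G j x - H j x) (ncmon H q) w)"
    by (simp add: ncmon_Cons ncmult_diff_id)
  have "ncnorm a (\<lambda>w. ncmon G (j#q) w - ncmon H (j#q) w) \<le>
     ncnorm a (ncmult (G j) (\<lambda>x. ncmon G q x - ncmon H q x)) + ncnorm a (ncmult (\<lambda>x. G j x - H j x) (ncmon H q))"
    unfolding eq using nsm_add(2)[of a, OF _ nsm_mult(1)[OF a G(1)[of j] s1] nsm_mult(1)[OF a s2 mH[THEN conjunct1]]] a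
    by simp
  also have "\<dots> \<le> ncnorm a (G j) * ncnorm a (\<lambda>x. ncmon G q x - ncmon H q x) + ncnorm a (\<lambda>x. G j x - H j x) * ncnorm a (ncmon H q)"
    using nsm_mult(2)[OF a G(1)[of j] s1] nsm_mult(2)[OF a s2 mH[THEN conjunct1]] by linarith
  also have "\<dots> \<le> M * (real (length q) * M ^ (length q - 1) * d) + d * M ^ length q"
    using Cons G(2)[of j] d[of j] mH ncnorm_nonneg[of a] a M d0
    by (intro add_mono mult_mono) auto
  also have "\<dots> = real (length (j#q)) * M ^ (length (j#q) - 1) * d"
    by (cases "length q") (auto simp: algebra_simps)
  finally show ?case .
qed

lemma power_bound:
  fixes M B :: real
  assumes "0 \<le> M" "M < B"
  shows "real k * M ^ (k - 1) * (B - M) \<le> B ^ k"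
proof (induction k)
  case 0 then show ?case by simp
next
  case (Suc k)
  have Mk: "M ^ k \<le> B ^ k" using assms by (intro power_mono) auto
  have "real (Suc k) * M ^ (Suc k - 1) * (B - M) = M * (real k * M ^ (k - 1) * (B - M)) + M ^ k * (B - M)"
    by (cases k) (auto simp: algebra_simps)
  also have "\<dots> \<le> M * B ^ k + B ^ k * (B - M)"
    using Suc assms Mk by (intro add_mono mult_left_mono mult_right_mono) auto
  also have "\<dots> = B ^ Suc k" by (simp add: algebra_simps)
  finally show ?case .
qed

lemma sub_lip:
  assumes a: "a > 0"
    and G: "\<And>i. nsm a (G i)" "\<And>i. ncnorm a (G i) \<le> M"
    and H: "\<And>i. nsm a (H i)" "\<And>i. ncnorm a (H i) \<le> M"
    and d: "\<And>i. ncnorm a (\<lambda>w. G i w - H i w) \<le> d"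
    and B: "M < B" and P: "nsm B P"
  shows "nsm a (\<lambda>w. ncsubst P G w - ncsubst P H w)"
    "ncnorm a (\<lambda>w. ncsubst P G w - ncsubst P H w) \<le> ncnorm B P * d / (B - M)"
proof -
  have M: "M \<ge> 0" using ncnorm_nonneg[of a "G 0"] G(2)[of 0] a by linarith
  have d0: "d \<ge> 0" using ncnorm_nonneg[of a "\<lambda>w. G 0 w - H 0 w"] d[of 0] a by linarith
  have PM: "nsm M P" using nsm_mono(1)[OF M _ P] B by simp
  define D where "D = (\<lambda>q w. ncmon G q w - ncmon H q w)"
  have h1: "nsm a (D q)" for q
  proof -
    have mG: "nsm a (ncmon G q)" using mon_bound[of a G M] a G by blast
    have mH: "nsm a (ncmon H q)" using mon_bound[of a H M] a H by blast
    show ?thesis unfolding D_def using nsm_diff(1)[OF _ mG mH] a by simp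
  qed
  have Dle: "ncnorm a (D q) \<le> B ^ length q * d / (B - M)" for q
  proof -
    have "ncnorm a (D q) \<le> real (length q) * M ^ (length q - 1) * d"
      unfolding D_def by (rule mon_lip[OF a G H d])
    also have "\<dots> \<le> B ^ length q / (B - M) * d"
    proof -
      have X: "real (length q) * M ^ (length q - 1) \<le> B ^ length q / (B - M)"
        using power_bound[OF M B, of "length q"] B by (simp add: field_simps)
      show ?thesis using mult_right_mono[OF X d0] .
    qed
    also have "\<dots> = B ^ length q * d / (B - M)" by simp
    finally show ?thesis .
  qed
  have le: "norm (P q) * ncnorm a (D q) \<le> norm (P q) * B ^ length q * (d / (B - M))" for q
    using mult_left_mono[OF Dle[of q] norm_ge_zero[of "P q"]] by (simp add: mult.assoc)
  have maj: "(\<lambda>q. norm (P q) * B ^ length q * (d / (B - M))) summable_on UNIV"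
    using P unfolding nsm_def by (rule summable_on_cmult_left)
  have h2: "(\<lambda>q. norm (P q) * ncnorm a (D q)) summable_on UNIV"
    by (rule summable_on_comparison_test[OF maj]) (use le a ncnorm_nonneg in auto)
  have eq: "(\<lambda>w. ncsubst P G w - ncsubst P H w) = (\<lambda>w. \<Sum>\<^sub>\<infinity>q. P q * D q w)"
  proof (rule ext)
    fix w
    have sG: "(\<lambda>q. P q * ncmon G q w) summable_on UNIV"
      by (rule sub_summ[of a G M P]) (use a G M PM in auto)
    have sH: "(\<lambda>q. P q * ncmon H q w) summable_on UNIV"
      by (rule sub_summ[of a H M P]) (use a H M PM in auto)
    have "((\<lambda>q. P q * ncmon G q w + (- (P q * ncmon H q w))) has_sum (ncsubst P G w + - ncsubst P H w)) UNIV"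
      unfolding ncsubst_def by (intro has_sum_add has_sum_uminusI) (use sG sH in auto)
    then show "ncsubst P G w - ncsubst P H w = (\<Sum>\<^sub>\<infinity>q. P q * D q w)"
      unfolding D_def by (simp add: has_sum_iff algebra_simps)
  qed
  show "nsm a (\<lambda>w. ncsubst P G w - ncsubst P H w)" unfolding eq by (rule master_nsm[OF a h1 h2])
  have "ncnorm a (\<lambda>w. ncsubst P G w - ncsubst P H w) \<le> (\<Sum>\<^sub>\<infinity>q. norm (P q) * ncnorm a (D q))"
    unfolding eq by (rule master_le[OF a h1 h2])
  also have "\<dots> \<le> (\<Sum>\<^sub>\<infinity>q. norm (P q) * B ^ length q * (d / (B - M)))"
    by (rule infsum_mono[OF h2 maj]) (rule le)
  also have "\<dots> = ncnorm B P * (d / (B - M))"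
    unfolding ncnorm_def by (rule infsum_cmult_left')
  also have "\<dots> = ncnorm B P * d / (B - M)" by simp
  finally show "ncnorm a (\<lambda>w. ncsubst P G w - ncsubst P H w) \<le> ncnorm B P * d / (B - M)" .
qed


definition supp :: "nat \<Rightarrow> ncser \<Rightarrow> bool" where
  "supp n P \<longleftrightarrow> (\<forall>w. \<not> set w \<subseteq> {..<n} \<longrightarrow> P w = 0)"

lemma supp_mult: assumes "supp n P" "supp n Q" shows "supp n (ncmult P Q)"
  unfolding supp_def
proof (intro allI impI)
  fix w assume w: "\<not> set w \<subseteq> {..<n}"
  have z: "P (take i w) * Q (drop i w) = 0" for i
  proof -
    have "\<not> set (take i w) \<subseteq> {..<n} \<or> \<not> set (drop i w) \<subseteq> {..<n}"
      using w by (metis append_take_drop_id set_append sup.bounded_iff)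
    then show ?thesis using assms unfolding supp_def by auto
  qed
  show "ncmult P Q w = 0" unfolding ncmult_def by (rule sum.neutral) (use z in blast)
qed

lemma supp_mon: assumes "\<And>i. i < n \<Longrightarrow> supp n (G i)" "set q \<subseteq> {..<n}"
  shows "supp n (ncmon G q)"
  using assms(2)
proof (induction q)
  case Nil then show ?case by (simp add: supp_def ncone_def)
next
  case (Cons j q) then show ?case by (simp add: ncmon_Cons supp_mult assms(1))
qed

lemma supp_sub: assumes "supp n P" "\<And>i. i < n \<Longrightarrow> supp n (G i)"
  shows "supp n (ncsubst P G)"
  unfolding supp_def
proof (intro allI impI)
  fix w assume w: "\<not> set w \<subseteq> {..<n}"
  have z: "P q * ncmon G q w = 0" for q
  proof (cases "set q \<subseteq> {..<n}")
    case True then show ?thesis using supp_mon[OF assms(2) True] w unfolding supp_def by auto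
  next
    case False then show ?thesis using assms(1) unfolding supp_def by auto
  qed
  show "ncsubst P G w = 0" unfolding ncsubst_def by (rule infsum_0) (use z in blast)
qed

lemma ncmon_cong: "(\<And>i. i \<in> set q \<Longrightarrow> Y i = Y' i) \<Longrightarrow> ncmon Y q = ncmon Y' q"
  by (induction q) (auto simp: ncmon_Cons)

lemma sub_cong_supp: assumes "supp n P" "\<And>i. i < n \<Longrightarrow> Y i = Y' i"
  shows "ncsubst P Y = ncsubst P Y'"
proof (rule ext)
  fix w
  have z: "P q * ncmon Y q w = P q * ncmon Y' q w" for q
  proof (cases "set q \<subseteq> {..<n}")
    case True then have "ncmon Y q = ncmon Y' q" using assms(2) by (intro ncmon_cong) auto
    then show ?thesis by simp
  next
    case False then show ?thesis using assms(1) unfolding supp_def by auto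
  qed
  show "ncsubst P Y w = ncsubst P Y' w" unfolding ncsubst_def by (rule infsum_cong) (use z in blast)
qed

lemma sub_diff:
  assumes a: "a > 0" and Y: "\<And>i. nsm a (Y i)" "\<And>i. ncnorm a (Y i) \<le> R" and R: "R \<ge> 0"
    and P: "nsm R P" and Q: "nsm R Q"
  shows "ncsubst (\<lambda>w. P w - Q w) Y w = ncsubst P Y w - ncsubst Q Y w"
proof -
  have sP: "(\<lambda>q. P q * ncmon Y q w) summable_on UNIV"
    by (rule sub_summ[of a Y R P]) (use a Y R P in auto)
  have sQ: "(\<lambda>q. Q q * ncmon Y q w) summable_on UNIV"
    by (rule sub_summ[of a Y R Q]) (use a Y R Q in auto)
  have "((\<lambda>q. P q * ncmon Y q w + (- (Q q * ncmon Y q w))) has_sum (ncsubst P Y w + - ncsubst Q Y w)) UNIV"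
    unfolding ncsubst_def by (intro has_sum_add has_sum_uminusI) (use sP sQ in auto)
  then show ?thesis unfolding ncsubst_def by (simp add: has_sum_iff algebra_simps)
qed

lemma lsc:
  assumes A: "A \<ge> 0" and lim: "\<And>w. (\<lambda>k. s k w) \<longlonglongrightarrow> p w"
    and ev: "eventually (\<lambda>k. nsm A (s k) \<and> ncnorm A (s k) \<le> b) sequentially"
  shows "nsm A p \<and> ncnorm A p \<le> b"
proof -
  have fin: "(\<Sum>w\<in>F. norm (p w) * A ^ length w) \<le> b" if "finite F" for F
  proof (rule tendsto_le[OF trivial_limit_sequentially])
    show "(\<lambda>k. \<Sum>w\<in>F. norm (s k w) * A ^ length w) \<longlonglongrightarrow> (\<Sum>w\<in>F. norm (p w) * A ^ length w)"
      by (intro tendsto_sum tendsto_mult tendsto_norm lim tendsto_const)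
    show "eventually (\<lambda>k. (\<Sum>w\<in>F. norm (s k w) * A ^ length w) \<le> b) sequentially"
    proof (rule eventually_mono[OF ev], clarify)
      fix k assume "nsm A (s k)" "ncnorm A (s k) \<le> b"
      moreover have "(\<Sum>w\<in>F. norm (s k w) * A ^ length w) \<le> ncnorm A (s k)"
        unfolding ncnorm_def by (rule finite_sum_le_infsum) (use that A \<open>nsm A (s k)\<close> in \<open>auto simp: nsm_def\<close>)
      ultimately show "(\<Sum>w\<in>F. norm (s k w) * A ^ length w) \<le> b" by linarith
    qed
  qed (rule tendsto_const)
  have s: "nsm A p" unfolding nsm_def
    by (rule nonneg_bdd_above_summable_on) (use A fin in \<open>auto intro!: bdd_aboveI\<close>)
  have "ncnorm A p \<le> b" unfolding ncnorm_def
    by (rule infsum_le_finite_sums) (use s fin in \<open>auto simp: nsm_def\<close>)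
  then show ?thesis using s by simp
qed

lemma geo_conv:
  fixes s :: "nat \<Rightarrow> complex"
  assumes "\<And>k. norm (s (Suc k) - s k) \<le> c * r ^ k" "0 \<le> r" "r < 1"
  shows "convergent s"
proof -
  have "summable (\<lambda>k. c * r ^ k)" using assms by (intro summable_mult summable_geometric) auto
  then have sm: "summable (\<lambda>k. s (Suc k) - s k)"
    by (rule summable_comparison_test[rotated]) (use assms in auto)
  have "(\<lambda>m. s 0 + (\<Sum>k<m. s (Suc k) - s k)) \<longlonglongrightarrow> s 0 + suminf (\<lambda>k. s (Suc k) - s k)"
    by (intro tendsto_add tendsto_const summable_LIMSEQ sm)
  then have "s \<longlonglongrightarrow> s 0 + suminf (\<lambda>k. s (Suc k) - s k)"
    by (simp add: sum_lessThan_telescope)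
  then show ?thesis by (auto simp: convergent_def)
qed


lemma ncnorm_swap: "ncnorm a (\<lambda>w. P w - Q w) = ncnorm a (\<lambda>w. Q w - P w)"
  by (simp add: ncnorm_def norm_minus_commute)

lemma nsm_swap: "nsm a (\<lambda>w. P w - Q w) = nsm a (\<lambda>w. Q w - P w)"
  by (simp add: nsm_def norm_minus_commute)

lemma nsm_gen: "nsm a (ncgen i)" "ncnorm a (ncgen i) = a"
  by (simp_all add: ncgen_delta nsm_delta)

lemma fixpoint:
  fixes A B M C :: real and F :: "nat \<Rightarrow> ncser"
  assumes A: "0 < A" "A < B" and MC: "M = (A + B) / 2" "C = (B - A) / 4"
    and F: "\<And>j. nsm B (F j)" "\<And>j. ncnorm B (F j) \<le> C" "\<And>j. supp n (F j)"
  shows "\<exists>G. (\<forall>i. nsm A (G i) \<and> ncnorm A (G i) \<le> M \<and> (i < n \<longrightarrow> supp n (G i))) \<and>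
             (\<forall>i. G i = (\<lambda>w. ncgen i w - ncsubst (F i) G w))"
proof -
  define \<Phi> where "\<Phi> = (\<lambda>(G::nat \<Rightarrow> ncser) j w. ncgen j w - ncsubst (F j) G w)"
  define Gs where "Gs = (\<lambda>k. (\<Phi> ^^ k) ncgen)"
  have Gs0: "Gs 0 = ncgen" and GsS: "\<And>k. Gs (Suc k) = \<Phi> (Gs k)" by (simp_all add: Gs_def)
  have M0: "0 \<le> M" "M < B" "A \<le> M" using A MC by auto
  have BM: "B - M = 2 * C" using MC by simp
  have C0: "C > 0" using A MC by simp
  have FM: "nsm M (F j)" "ncnorm M (F j) \<le> C" for j
    using nsm_mono[OF M0(1) _ F(1)[of j]] M0 F(2)[of j] by auto
  define Inv where "Inv = (\<lambda>G::nat \<Rightarrow> ncser. \<forall>i. nsm A (G i) \<and> ncnorm A (G i) \<le> M)"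
  have inv_step: "Inv (\<Phi> G)" if "Inv G" for G
    unfolding Inv_def
  proof
    fix i
    have G: "\<And>i. nsm A (G i)" "\<And>i. ncnorm A (G i) \<le> M" using that by (auto simp: Inv_def)
    have s1: "nsm A (ncsubst (F i) G)" and l1: "ncnorm A (ncsubst (F i) G) \<le> ncnorm M (F i)"
      using sub_nsm[OF A(1) G(1) G(2) M0(1) FM(1)] sub_le[OF A(1) G(1) G(2) M0(1) FM(1)] by auto
    have "nsm A (\<Phi> G i)" unfolding \<Phi>_def using nsm_diff(1)[OF _ nsm_gen(1)[of A i] s1] A by simp
    moreover have "ncnorm A (\<Phi> G i) \<le> A + ncnorm M (F i)"
      unfolding \<Phi>_def using nsm_diff(2)[OF _ nsm_gen(1)[of A i] s1] A l1 by (simp add: nsm_gen)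
    ultimately show "nsm A (\<Phi> G i) \<and> ncnorm A (\<Phi> G i) \<le> M"
      using FM(2)[of i] MC A by auto
  qed
  have contr: "nsm A (\<lambda>w. \<Phi> G i w - \<Phi> H i w) \<and> ncnorm A (\<lambda>w. \<Phi> G i w - \<Phi> H i w) \<le> d / 2"
    if "Inv G" "Inv H" "\<And>i. ncnorm A (\<lambda>w. G i w - H i w) \<le> d" for G H d i
  proof -
    have G: "\<And>i. nsm A (G i)" "\<And>i. ncnorm A (G i) \<le> M" using that by (auto simp: Inv_def)
    have H: "\<And>i. nsm A (H i)" "\<And>i. ncnorm A (H i) \<le> M" using that by (auto simp: Inv_def)
    have d: "ncnorm A (\<lambda>w. H i w - G i w) \<le> d" for i using that(3)[of i] ncnorm_swap[of A "G i" "H i"] by simp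
    have d0: "d \<ge> 0" using ncnorm_nonneg[of A "\<lambda>w. G 0 w - H 0 w"] that(3)[of 0] A by linarith
    have eq: "(\<lambda>w. \<Phi> G i w - \<Phi> H i w) = (\<lambda>w. ncsubst (F i) H w - ncsubst (F i) G w)"
      by (simp add: \<Phi>_def fun_eq_iff)
    have "ncnorm A (\<lambda>w. ncsubst (F i) H w - ncsubst (F i) G w) \<le> ncnorm B (F i) * d / (B - M)"
      by (rule sub_lip(2)[OF A(1) H G d M0(2) F(1)])
    also have "\<dots> \<le> C * d / (B - M)"
      using F(2)[of i] d0 M0 by (intro divide_right_mono mult_right_mono) auto
    also have "\<dots> = d / 2" using BM C0 by simp
    finally show ?thesis unfolding eq using sub_lip(1)[OF A(1) H G d M0(2) F(1)] by simp
  qed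
  have inv: "Inv (Gs k)" for k
  proof (induction k)
    case 0 then show ?case by (simp add: Gs0 Inv_def nsm_gen M0)
  next
    case (Suc k) then show ?case by (simp add: GsS inv_step)
  qed
  define d0 where "d0 = 2 * M"
  have step: "nsm A (\<lambda>w. Gs (Suc k) i w - Gs k i w) \<and> ncnorm A (\<lambda>w. Gs (Suc k) i w - Gs k i w) \<le> d0 * (1/2) ^ k" for k i
  proof (induction k arbitrary: i)
    case 0
    have a: "nsm A (Gs (Suc 0) i)" "ncnorm A (Gs (Suc 0) i) \<le> M" "nsm A (Gs 0 i)" "ncnorm A (Gs 0 i) \<le> M"
      using inv[of 1] inv[of 0] by (auto simp: Inv_def)
    show ?case using nsm_diff[OF _ a(1) a(3)] a A by (simp add: d0_def)
  next
    case (Suc k)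
    have "nsm A (\<lambda>w. \<Phi> (Gs (Suc k)) i w - \<Phi> (Gs k) i w) \<and> ncnorm A (\<lambda>w. \<Phi> (Gs (Suc k)) i w - \<Phi> (Gs k) i w) \<le> d0 * (1/2) ^ k / 2"
      by (rule contr[OF inv inv]) (use Suc in blast)
    then show ?case by (simp add: GsS[symmetric] mult.assoc)
  qed
  have tele: "nsm A (\<lambda>w. Gs (k + j) i w - Gs k i w) \<and> ncnorm A (\<lambda>w. Gs (k + j) i w - Gs k i w) \<le> 2 * d0 * ((1/2) ^ k - (1/2) ^ (k + j))" for k j i
  proof (induction j)
    case 0 then show ?case by (simp add: nsm_def ncnorm_def)
  next
    case (Suc j)
    have eq: "(\<lambda>w. Gs (k + Suc j) i w - Gs k i w) = (\<lambda>w. (Gs (Suc (k + j)) i w - Gs (k + j) i w) + (Gs (k + j) i w - Gs k i w))"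
      by simp
    note s1 = step[of "k + j" i]
    have "ncnorm A (\<lambda>w. Gs (k + Suc j) i w - Gs k i w) \<le> d0 * (1/2) ^ (k + j) + 2 * d0 * ((1/2) ^ k - (1/2) ^ (k + j))"
      unfolding eq using nsm_add(2)[OF _ conjunct1[OF s1] conjunct1[OF Suc]] s1 Suc A by linarith
    also have "\<dots> = 2 * d0 * ((1/2) ^ k - (1/2) ^ (k + Suc j))" by (simp add: algebra_simps)
    finally show ?case unfolding eq using nsm_add(1)[OF _ conjunct1[OF s1] conjunct1[OF Suc]] A by simp
  qed
  have coef: "norm (Gs (Suc k) i w - Gs k i w) \<le> (d0 / A ^ length w) * (1/2) ^ k" for k i w
  proof -
    have "norm (Gs (Suc k) i w - Gs k i w) * A ^ length w \<le> d0 * (1/2) ^ k"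
      using coef_le[of A "\<lambda>w. Gs (Suc k) i w - Gs k i w" w] step[of k i] A by auto
    then show ?thesis using A by (simp add: field_simps)
  qed
  define G where "G = (\<lambda>i w. lim (\<lambda>k. Gs k i w))"
  have lim: "(\<lambda>k. Gs k i w) \<longlonglongrightarrow> G i w" for i w
    unfolding G_def convergent_LIMSEQ_iff[symmetric] by (rule geo_conv[OF coef]) auto
  have invG: "nsm A (G i) \<and> ncnorm A (G i) \<le> M" for i
    by (rule lsc[OF _ lim]) (use A inv in \<open>auto simp: Inv_def\<close>)
  then have InvG: "Inv G" by (simp add: Inv_def)
  have dist: "nsm A (\<lambda>w. G i w - Gs k i w) \<and> ncnorm A (\<lambda>w. G i w - Gs k i w) \<le> 2 * d0 * (1/2) ^ k" for i k
  proof (rule lsc[where s="\<lambda>m w. Gs m i w - Gs k i w"])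
    show "(\<lambda>m. Gs m i w - Gs k i w) \<longlonglongrightarrow> G i w - Gs k i w" for w
      by (intro tendsto_diff lim tendsto_const)
    show "eventually (\<lambda>m. nsm A (\<lambda>w. Gs m i w - Gs k i w) \<and> ncnorm A (\<lambda>w. Gs m i w - Gs k i w) \<le> 2 * d0 * (1/2) ^ k) sequentially"
      unfolding eventually_sequentially
    proof (intro exI allI impI)
      fix m assume "k \<le> m"
      then obtain j where m: "m = k + j" using le_Suc_ex by blast
      have "(0::real) \<le> 2 * d0 * (1/2) ^ (k + j)" using M0 by (simp add: d0_def)
      then show "nsm A (\<lambda>w. Gs m i w - Gs k i w) \<and> ncnorm A (\<lambda>w. Gs m i w - Gs k i w) \<le> 2 * d0 * (1/2) ^ k"
        using tele[of k j i] m by (auto simp: algebra_simps)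
    qed
  qed (use A in auto)
  have fixG: "G i w = \<Phi> G i w" for i w
  proof -
    have b: "norm (Gs (Suc k) i w - \<Phi> G i w) \<le> (d0 / A ^ length w) * (1/2) ^ k" for k
    proof -
      have c: "nsm A (\<lambda>w. \<Phi> G i w - \<Phi> (Gs k) i w) \<and> ncnorm A (\<lambda>w. \<Phi> G i w - \<Phi> (Gs k) i w) \<le> 2 * d0 * (1/2) ^ k / 2"
        by (rule contr[OF InvG inv]) (use dist in blast)
      have "norm (\<Phi> G i w - \<Phi> (Gs k) i w) * A ^ length w \<le> d0 * (1/2) ^ k"
        using coef_le[of A "\<lambda>w. \<Phi> G i w - \<Phi> (Gs k) i w" w] c A by auto
      then show ?thesis using A by (simp add: field_simps GsS norm_minus_commute)
    qed
    have t0: "(\<lambda>k. (d0 / A ^ length w) * (1/2) ^ k) \<longlonglongrightarrow> (d0 / A ^ length w) * 0"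
      by (intro tendsto_mult tendsto_const LIMSEQ_power_zero) simp
    have "(\<lambda>k. Gs (Suc k) i w - \<Phi> G i w) \<longlonglongrightarrow> 0"
    proof (rule Lim_null_comparison)
      show "eventually (\<lambda>k. norm (Gs (Suc k) i w - \<Phi> G i w) \<le> (d0 / A ^ length w) * (1/2) ^ k) sequentially"
        by (intro always_eventually allI b)
      show "(\<lambda>k. (d0 / A ^ length w) * (1/2) ^ k) \<longlonglongrightarrow> 0" using t0 by simp
    qed
    then have "(\<lambda>k. Gs (Suc k) i w) \<longlonglongrightarrow> \<Phi> G i w" by (simp add: LIM_zero_iff)
    moreover have "(\<lambda>k. Gs (Suc k) i w) \<longlonglongrightarrow> G i w" by (rule LIMSEQ_Suc[OF lim])
    ultimately show ?thesis using LIMSEQ_unique by blast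
  qed
  have suppGs: "i < n \<Longrightarrow> supp n (Gs k i)" for k i
  proof (induction k arbitrary: i)
    case 0 then show ?case by (auto simp: Gs0 supp_def ncgen_def)
  next
    case (Suc k)
    have "supp n (ncsubst (F i) (Gs k))" by (rule supp_sub[OF F(3)]) (use Suc in blast)
    then show ?case using Suc.prems by (auto simp: GsS \<Phi>_def supp_def ncgen_def)
  qed
  have suppG: "i < n \<Longrightarrow> supp n (G i)" for i
    unfolding supp_def
  proof (intro allI impI)
    fix w assume "i < n" "\<not> set w \<subseteq> {..<n}"
    then have "\<And>k. Gs k i w = 0" using suppGs unfolding supp_def by blast
    then have "(\<lambda>k. Gs k i w) \<longlonglongrightarrow> 0" by simp
    then show "G i w = 0" using lim LIMSEQ_unique by blast
  qed
  show ?thesis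
  proof (intro exI conjI allI impI)
    fix i
    show "nsm A (G i)" "ncnorm A (G i) \<le> M" using invG by auto
    show "i < n \<Longrightarrow> supp n (G i)" by (rule suppG)
    show "G i = (\<lambda>w. ncgen i w - ncsubst (F i) G w)" using fixG by (auto simp: \<Phi>_def)
  qed
qed


lemma identify:
  fixes A' A B M C :: real and F G Y :: "nat \<Rightarrow> ncser"
  assumes A: "0 < A'" "A' \<le> A" "A < B" and MC: "M = (A + B) / 2" "C = (B - A) / 4"
    and F: "\<And>j. nsm B (F j)" "\<And>j. ncnorm B (F j) \<le> C"
    and Y: "\<And>i. Y i = (\<lambda>w. ncgen i w + F i w)" "\<And>i. nsm A' (Y i)" "\<And>i. ncnorm A' (Y i) \<le> A"
    and G: "\<And>i. nsm A (G i)" "\<And>i. ncnorm A (G i) \<le> M" "\<And>i. G i = (\<lambda>w. ncgen i w - ncsubst (F i) G w)"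
  shows "ncsubst (G j) Y = ncgen j"
proof -
  have A0: "A > 0" using A by simp
  have M0: "0 \<le> M" "M < B" "A \<le> M" "A' \<le> M" using A MC by auto
  have BM: "B - M = 2 * C" using MC by simp
  have C0: "C > 0" using A MC by simp
  have FM: "nsm M (F j)" for j using nsm_mono(1)[OF M0(1) _ F(1)[of j]] M0 by auto
  define Z where "Z = (\<lambda>i. ncsubst (G i) Y)"
  have Zb: "nsm A' (Z i)" "ncnorm A' (Z i) \<le> M" for i
    using sub_nsm[of A' Y A "G i"] sub_le[of A' Y A "G i"] A Y(2) Y(3) G(1)[of i] G(2)[of i] A0
    unfolding Z_def by force+
  have sF: "nsm A (ncsubst (F i) G)" for i
    by (rule sub_nsm[of A G M "F i"]) (use A0 G M0 FM in auto)
  have eqZ: "Z i w - ncgen i w = ncsubst (F i) ncgen w - ncsubst (F i) Z w" for i w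
  proof -
    have "Z i w = ncsubst (\<lambda>w. ncgen i w - ncsubst (F i) G w) Y w"
      unfolding Z_def using G(3)[of i] by metis
    also have "\<dots> = ncsubst (ncgen i) Y w - ncsubst (ncsubst (F i) G) Y w"
      by (rule sub_diff[of A' Y A]) (use A0 A Y sF in \<open>auto simp: nsm_gen\<close>)
    also have "\<dots> = Y i w - ncsubst (F i) Z w"
      unfolding sub_gen Z_def by (subst sub_comp[of A' Y A G M "F i"]) (use A A0 Y G FM in auto)
    also have "\<dots> = ncgen i w + ncsubst (F i) ncgen w - ncsubst (F i) Z w"
      using Y(1)[of i] by (simp add: sub_gen_id)
    finally show ?thesis by simp
  qed
  define \<delta> where "\<delta> = (SUP i. ncnorm A' (\<lambda>w. ncgen i w - Z i w))"
  have nb: "ncnorm A' (\<lambda>w. ncgen i w - Z i w) \<le> A' + M" for i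
    using nsm_diff(2)[OF _ nsm_gen(1)[of A' i] Zb(1)[of i]] Zb(2)[of i] A by (simp add: nsm_gen)
  have bdd: "bdd_above (range (\<lambda>i. ncnorm A' (\<lambda>w. ncgen i w - Z i w)))"
    by (rule bdd_aboveI[where M="A' + M"]) (use nb in auto)
  have le\<delta>: "ncnorm A' (\<lambda>w. ncgen i w - Z i w) \<le> \<delta>" for i
    unfolding \<delta>_def by (rule cSUP_upper[OF _ bdd]) simp
  have d0: "\<delta> \<ge> 0" using le\<delta>[of 0] ncnorm_nonneg[of A' "\<lambda>w. ncgen 0 w - Z 0 w"] A by linarith
  have half: "ncnorm A' (\<lambda>w. ncgen i w - Z i w) \<le> \<delta> / 2" for i
  proof -
    have "ncnorm A' (\<lambda>w. ncgen i w - Z i w) = ncnorm A' (\<lambda>w. ncsubst (F i) ncgen w - ncsubst (F i) Z w)"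
      using eqZ[of i] by (subst ncnorm_swap) simp
    also have "\<dots> \<le> ncnorm B (F i) * \<delta> / (B - M)"
      by (rule sub_lip(2)[of A' ncgen M Z \<delta> B "F i"]) (use A M0 Zb le\<delta> F in \<open>simp_all add: nsm_gen\<close>)
    also have "\<dots> \<le> C * \<delta> / (B - M)"
      using F(2)[of i] d0 M0 by (intro divide_right_mono mult_right_mono) auto
    also have "\<dots> = \<delta> / 2" using BM C0 by simp
    finally show ?thesis .
  qed
  have "\<delta> \<le> \<delta> / 2" unfolding \<delta>_def[of] by (rule cSUP_least) (use half \<delta>_def in auto)
  then have "\<delta> \<le> 0" by simp
  then have n0: "ncnorm A' (\<lambda>w. ncgen j w - Z j w) \<le> 0" using le\<delta>[of j] by linarith
  have nz: "nsm A' (\<lambda>w. ncgen j w - Z j w)"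
    using nsm_diff(1)[OF _ nsm_gen(1)[of A' j] Zb(1)[of j]] A by simp
  have "ncgen j w - Z j w = 0" for w by (rule ncnorm_eq0[OF A(1) nz n0])
  then show ?thesis by (auto simp: Z_def fun_eq_iff)
qed

theorem mainTheorem2:
  fixes A' A B :: real
  assumes "1 < A'" "A' < A" "A < B"
  shows "\<exists>C>0. \<forall>(n::nat) (f::nat \<Rightarrow> ncser).
           (\<forall>j<n. in_ncA n B (f j)) \<longrightarrow>
           (\<forall>j<n. ncnorm B (f j) < C) \<longrightarrow>
           (\<forall>j<n. ncnorm A' (\<lambda>w. ncgen j w + f j w) \<le> A) \<longrightarrow>
           (\<exists>G::nat \<Rightarrow> ncser. (\<forall>j<n. in_ncA n A (G j)) \<and>
              (\<forall>j<n. ncsubst (G j) (\<lambda>i w. ncgen i w + f i w) = ncgen j))"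
proof (intro exI[of _ "(B - A) / 4"] conjI allI impI)
  show "(B - A) / 4 > 0" using assms by simp
  fix n and f :: "nat \<Rightarrow> ncser"
  assume h1: "\<forall>j<n. in_ncA n B (f j)" and h2: "\<forall>j<n. ncnorm B (f j) < (B - A) / 4"
    and h3: "\<forall>j<n. ncnorm A' (\<lambda>w. ncgen j w + f j w) \<le> A"
  define C where "C = (B - A) / 4"
  define M where "M = (A + B) / 2"
  define F where "F = (\<lambda>j. if j < n then f j else (\<lambda>_. 0))"
  define Y where "Y = (\<lambda>i w. ncgen i w + F i w)"
  have A0: "0 < A'" "0 < A" using assms by auto
  have F1: "nsm B (F j)" for j using h1 by (auto simp: F_def in_ncA_def nsm_def)
  have F2: "ncnorm B (F j) \<le> C" for j using h2 assms by (auto simp: F_def C_def ncnorm_def)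
  have F3: "supp n (F j)" for j using h1 by (auto simp: F_def in_ncA_def supp_def)
  have Y2: "nsm A' (Y i)" for i
  proof -
    have "nsm A' (F i)" using nsm_mono(1)[of A' B "F i"] F1 assms by auto
    then show ?thesis unfolding Y_def using nsm_add(1)[OF _ nsm_gen(1)[of A' i]] A0 by simp
  qed
  have Y3: "ncnorm A' (Y i) \<le> A" for i
  proof (cases "i < n")
    case True then show ?thesis using h3 by (simp add: Y_def F_def)
  next
    case False then show ?thesis using assms by (simp add: Y_def F_def nsm_gen)
  qed
  obtain G where G: "\<And>i. nsm A (G i)" "\<And>i. ncnorm A (G i) \<le> M" "\<And>i. i < n \<Longrightarrow> supp n (G i)"
    "\<And>i. G i = (\<lambda>w. ncgen i w - ncsubst (F i) G w)"
    using fixpoint[of A B M C F n] A0 assms M_def C_def F1 F2 F3 by blast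
  have idt: "ncsubst (G j) Y = ncgen j" for j
    by (rule identify[of A' A B M C F Y G]) (use assms A0 M_def C_def F1 F2 Y2 Y3 G in \<open>auto simp: Y_def\<close>)
  show "\<exists>G::nat \<Rightarrow> ncser. (\<forall>j<n. in_ncA n A (G j)) \<and>
              (\<forall>j<n. ncsubst (G j) (\<lambda>i w. ncgen i w + f i w) = ncgen j)"
  proof (intro exI[of _ G] conjI allI impI)
    fix j assume j: "j < n"
    show "in_ncA n A (G j)" using G(1)[of j] G(3)[OF j] by (auto simp: in_ncA_def supp_def nsm_def)
    have "ncsubst (G j) (\<lambda>i w. ncgen i w + f i w) = ncsubst (G j) Y"
      by (rule sub_cong_supp[OF G(3)[OF j]]) (auto simp: Y_def F_def)
    then show "ncsubst (G j) (\<lambda>i w. ncgen i w + f i w) = ncgen j" using idt by simp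
  qed
qed

end
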